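(* Let $\Lambda$ satisfy (RC). There exists a bounded linear operator $I^{\rm h}_2:\dot{\mathscr U}^{1,2}(\Lambda)\to\dot{\mathscr U}^{1,2}(\Lambda^{\rm h})$ and $C>0$ such that $\|DI^{\rm h}_2u\|_{\ell^2_{\mathcal N}(\Lambda^{\rm h})}\le C\|Du\|_{\ell^2_{\mathcal N}(\Lambda)}$ and $I^{\rm h}_2u(\ell)=u(\ell)$ for all $|\ell|>R_{\rm def}$ and all $u\in\dot{\mathscr U}^{1,2}(\Lambda)$. Moreover, there is $c_0\in(0,1]$ such that for every $r>0$ there exists $R\ge r$ with $$\sum_{\ell\in\Lambda^{\rm h}\cap B_r}|DI^{\rm h}_2u(\ell)|_{\mathfrak w,1}\le C\sum_{\ell\in\Lambda\cap B_R}|Du(\ell)|_{\tilde{\mathfrak w},1}$$ for all $\mathfrak w\in\mathscr L_1$ and $u\in\dot{\mathscr U}^{1,2}(\Lambda)$, where $\tilde{\mathfrak w}(t):=\mathfrak w(c_0t)$ (which lies in $\mathscr L_1$).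
   Context: Let $d\in\{2,3\}$, $\mathsf d_s\in\{2,3\}$. $B_R$ is the open ball of radius $R$ at $0$. $A\in\mathbb R^{d\times d}$ nonsingular, $\Lambda^{\rm h}:=A\mathbb Z^d$. A set $\Lambda\subset\mathbb R^d$ satisfies (RC) if there is $R_{\rm def}>0$ with $\Lambda\setminus B_{R_{\rm def}}=\Lambda^{\rm h}\setminus B_{R_{\rm def}}$ and $\Lambda\cap B_{R_{\rm def}}$ finite. For $\Lambda'\in\{\Lambda,\Lambda^{\rm h}\}$ and $\ell\in\Lambda'$: $\Lambda'-\ell:=\{m-\ell:m\in\Lambda'\setminus\{\ell\}\}$; $\mathcal N(\ell)$ is the set of $m\in\Lambda'\setminus\{\ell\}$ for which some $a$ has $|a-\ell|=|a-m|\le|a-k|$ for all $k\in\Lambda'$. For $u:\Lambda'\to\mathbb R^{\mathsf d_s}$: $D_\rho u(\ell):=u(\ell+\rho)-u(\ell)$, $\|Du\|_{\ell^2_{\mathcal N}(\Lambda')}:=(\sum_\ell\sum_{\rho\in\mathcal N(\ell)-\ell}|D_\rho u(\ell)|^2)^{1/2}$, $\dot{\mathscr U}^{1,2}(\Lambda'):=\{u:\|Du\|_{\ell^2_{\mathcal N}(\Lambda')}<\infty\}$. $\mathscr L_1$ is the set of monotonically decreasing $\mathfrak w:[0,\infty)\to(0,\infty)$ with $\|\mathfrak w\|_{L^\infty}+\int_0^\infty r^{d}\mathfrak w(r)dr<\infty$, and $|Du(\ell)|_{\mathfrak w,1}:=\sum_{\rho\in\Lambda'-\ell}\mathfrak w(|\rho|)|D_\rho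 u(\ell)|$. *)

theory Defs
  imports "HOL-Analysis.Analysis"
begin

definition hom_lattice :: "real^'d^'d \<Rightarrow> (real^'d) set" where
  "hom_lattice A = range (\<lambda>z::int^'d. A *v (\<chi> i. real_of_int (z $ i)))"

definition RC :: "(real^'d) set \<Rightarrow> (real^'d) set \<Rightarrow> real \<Rightarrow> bool" where
  "RC Lam Lamh Rdef \<longleftrightarrow> Rdef > 0 \<and> Lam - ball 0 Rdef = Lamh - ball 0 Rdef
     \<and> finite (Lam \<inter> ball 0 Rdef)"

text \<open>Voronoi neighbours N(l) of a site l in the set Lam'.\<close>
definition nbrs :: "(real^'d) set \<Rightarrow> real^'d \<Rightarrow> (real^'d) set" where
  "nbrs Lam' l = {m \<in> Lam' - {l}. \<exists>a. dist a l = dist a m \<and> (\<forall>k\<in>Lam'. dist a l \<le> dist a k)}"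

definition nb_pairs :: "(real^'d) set \<Rightarrow> ((real^'d) \<times> (real^'d)) set" where
  "nb_pairs Lam' = {(l, m). l \<in> Lam' \<and> m \<in> nbrs Lam' l}"

definition Dnorm_sq_terms :: "(real^'d \<Rightarrow> real^'s) \<Rightarrow> (real^'d) \<times> (real^'d) \<Rightarrow> real" where
  "Dnorm_sq_terms u = (\<lambda>(l, m). (norm (u m - u l))^2)"

definition U12 :: "(real^'d) set \<Rightarrow> (real^'d \<Rightarrow> real^'s) set" where
  "U12 Lam' = {u. Dnorm_sq_terms u summable_on nb_pairs Lam'}"

definition Dnorm :: "(real^'d) set \<Rightarrow> (real^'d \<Rightarrow> real^'s) \<Rightarrow> real" where
  "Dnorm Lam' u = sqrt (infsum (Dnorm_sq_terms u) (nb_pairs Lam'))"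

definition wnorm1 :: "(real^'d) set \<Rightarrow> (real \<Rightarrow> real) \<Rightarrow> (real^'d \<Rightarrow> real^'s) \<Rightarrow> real^'d \<Rightarrow> ennreal" where
  "wnorm1 Lam' w u l = (\<Sum>\<^sub>\<infinity> m \<in> Lam' - {l}. ennreal (w (norm (m - l)) * norm (u m - u l)))"

definition L1w :: "nat \<Rightarrow> (real \<Rightarrow> real) set" where
  "L1w d = {w. (\<forall>r\<ge>0. w r > 0) \<and> (\<forall>r s. 0 \<le> r \<longrightarrow> r \<le> s \<longrightarrow> w s \<le> w r)
     \<and> (\<exists>B. \<forall>r\<ge>0. \<bar>w r\<bar> \<le> B)
     \<and> (\<lambda>r. r ^ d * w r) integrable_on {0..}}"

end

theory Submission
  imports Defs
begin


lemma inv_obtain: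
  fixes A :: "real^'d^'d"
  assumes "invertible A"
  obtains B where "\<And>x. A *v (B *v x) = x" "\<And>x. B *v (A *v x) = x"
  using assms unfolding invertible_def
  by (metis matrix_vector_mul_assoc matrix_vector_mul_lid)

lemma mat_bound:
  fixes A :: "real^'d^'d"
  obtains K where "K > 0" "\<And>x. norm (A *v x) \<le> K * norm x"
  using bounded_linear.pos_bounded[OF matrix_vector_mul_bounded_linear[of A]]
  by (metis mult.commute)

lemma hom_lattice_mem: "x \<in> hom_lattice A \<longleftrightarrow> (\<exists>z::int^'d. x = A *v (\<chi> i. real_of_int (z $ i)))"
  unfolding hom_lattice_def by auto

lemma cover:
  fixes A :: "real^'d^'d"
  assumes "invertible A"
  obtains \<rho> where "\<rho> > 0" "\<And>a. \<exists>k\<in>hom_lattice A. dist a k \<le> \<rho>"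
proof -
  obtain B where B: "\<And>x. A *v (B *v x) = x" using inv_obtain[OF assms] by metis
  obtain K where K: "K > 0" "\<And>x. norm (A *v x) \<le> K * norm x" using mat_bound by metis
  have "\<exists>k\<in>hom_lattice A. dist a k \<le> K * CARD('d)" for a
  proof -
    define y where "y = B *v a"
    define z :: "int^'d" where "z = (\<chi> i. floor (y $ i))"
    define zr :: "real^'d" where "zr = (\<chi> i. real_of_int (z $ i))"
    have k: "A *v zr \<in> hom_lattice A" unfolding zr_def hom_lattice_mem by blast
    have "a - A *v zr = A *v (y - zr)" using B y_def by (simp add: matrix_vector_mult_diff_distrib)
    hence "dist a (A *v zr) \<le> K * norm (y - zr)" using K(2) by (simp add: dist_norm)
    also have "norm (y - zr) \<le> (\<Sum>i\<in>UNIV. \<bar>(y - zr) $ i\<bar>)" by (rule norm_le_l1_cart)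
    also have "\<dots> \<le> (\<Sum>i\<in>(UNIV::'d set). 1)"
      apply (rule sum_mono) unfolding zr_def z_def by simp linarith
    finally have "dist a (A *v zr) \<le> K * CARD('d)" using K(1) by (simp add: mult_left_mono)
    thus ?thesis using k by blast
  qed
  thus ?thesis using that[of "K * CARD('d)"] K(1) by simp
qed

lemma sep:
  fixes A :: "real^'d^'d"
  assumes "invertible A"
  obtains \<delta> where "\<delta> > 0" "\<And>x y. x \<in> hom_lattice A \<Longrightarrow> y \<in> hom_lattice A \<Longrightarrow> x \<noteq> y \<Longrightarrow> \<delta> \<le> dist x y"
proof -
  obtain B where B: "\<And>x. B *v (A *v x) = x" using inv_obtain[OF assms] by metis
  obtain K where K: "K > 0" "\<And>x. norm (B *v x) \<le> K * norm x" using mat_bound by metis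
  have "1 / K \<le> dist x y" if hx: "x \<in> hom_lattice A" and hy: "y \<in> hom_lattice A" and hne: "x \<noteq> y" for x y
  proof -
    obtain zx :: "int^'d" where zx: "x = A *v (\<chi> i. real_of_int (zx $ i))" using hx unfolding hom_lattice_def by blast
    obtain zy :: "int^'d" where zy: "y = A *v (\<chi> i. real_of_int (zy $ i))" using hy unfolding hom_lattice_def by blast
    define v :: "real^'d" where "v = (\<chi> i. real_of_int (zx $ i - zy $ i))"
    have vv: "(\<chi> i. real_of_int (zx $ i)) - (\<chi> i. real_of_int (zy $ i)) = v"
      by (simp add: v_def vec_eq_iff)
    have xy: "x - y = A *v v" unfolding zx zy vv[symmetric]
      by (rule matrix_vector_mult_diff_distrib[symmetric])
    have "v \<noteq> 0" using hne xy by auto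
    then obtain i where "v $ i \<noteq> 0" by (metis vec_eq_iff zero_index)
    hence "1 \<le> \<bar>v $ i\<bar>" unfolding v_def by simp
    also have "\<dots> \<le> norm v" by (rule component_le_norm_cart)
    also have "norm v = norm (B *v (x - y))" using xy B by simp
    also have "\<dots> \<le> K * dist x y" using K(2) by (simp add: dist_norm)
    finally show ?thesis using K(1) by (simp add: field_simps)
  qed
  thus ?thesis using that[of "1/K"] K(1) by simp
qed



lemma finite_int_box: "finite {z::int^'d. \<forall>i. z$i \<in> {-M..M}}"
proof -
  have "{z::int^'d. \<forall>i. z$i \<in> {-M..M}} \<subseteq> (\<lambda>f. \<chi> i. f i) ` (Pi\<^sub>E UNIV (\<lambda>_. {-M..M}))"
  proof
    fix z :: "int^'d" assume "z \<in> {z::int^'d. \<forall>i. z$i \<in> {-M..M}}"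
    hence "(\<lambda>i. z$i) \<in> Pi\<^sub>E UNIV (\<lambda>_. {-M..M})" by auto
    thus "z \<in> (\<lambda>f. \<chi> i. f i) ` (Pi\<^sub>E UNIV (\<lambda>_. {-M..M}))" by (metis image_eqI vec_lambda_eta)
  qed
  moreover have "finite (Pi\<^sub>E (UNIV::'d set) (\<lambda>_. {-M..M}))" by (intro finite_PiE) auto
  ultimately show ?thesis by (meson finite_imageI finite_subset)
qed

lemma lat_finite:
  fixes A :: "real^'d^'d"
  assumes "invertible A"
  shows "finite (hom_lattice A \<inter> cball 0 R)"
proof -
  obtain B where B: "\<And>x. B *v (A *v x) = x" using inv_obtain[OF assms] by metis
  obtain K where K: "K > 0" "\<And>x. norm (B *v x) \<le> K * norm x" using mat_bound by metis
  define M where "M = ceiling (K * R)"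
  have "hom_lattice A \<inter> cball 0 R \<subseteq> (\<lambda>z. A *v (\<chi> i. real_of_int (z $ i))) ` {z::int^'d. \<forall>i. z$i \<in> {-M..M}}"
  proof
    fix x assume x: "x \<in> hom_lattice A \<inter> cball 0 R"
    then obtain z :: "int^'d" where z: "x = A *v (\<chi> i. real_of_int (z $ i))" unfolding hom_lattice_def by blast
    have "\<forall>i. z$i \<in> {-M..M}"
    proof
      fix i
      have "\<bar>real_of_int (z$i)\<bar> = \<bar>(\<chi> i. real_of_int (z $ i)) $ i\<bar>" by simp
      also have "\<dots> \<le> norm (\<chi> i. real_of_int (z $ i))" by (rule component_le_norm_cart)
      also have "\<dots> = norm (B *v x)" using B z by simp
      also have "\<dots> \<le> K * norm x" by (rule K(2))
      also have "\<dots> \<le> K * R" using x K(1) by (intro mult_left_mono) auto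
      finally have "\<bar>real_of_int (z$i)\<bar> \<le> K * R" .
      thus "z$i \<in> {-M..M}" unfolding M_def by (simp add: abs_le_iff) linarith
    qed
    thus "x \<in> (\<lambda>z. A *v (\<chi> i. real_of_int (z $ i))) ` {z::int^'d. \<forall>i. z$i \<in> {-M..M}}" using z by blast
  qed
  thus ?thesis using finite_int_box[of M, where ?'d='d] by (rule finite_subset[OF _ finite_imageI])
qed



lemma bis_le:
  fixes p v k :: "'a::real_inner"
  shows "dist (p + t *\<^sub>R v) p \<le> dist (p + t *\<^sub>R v) k \<longleftrightarrow> 2*t*(inner v (k-p)) \<le> inner (k-p) (k-p)"
proof -
  have e1: "p + t *\<^sub>R v - p = t *\<^sub>R v" by simp
  have e2: "p + t *\<^sub>R v - k = t *\<^sub>R v - (k - p)" by (simp add: algebra_simps)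
  show ?thesis unfolding dist_norm norm_le e1 e2
    by (simp add: inner_diff_left inner_diff_right inner_commute algebra_simps)
qed

lemma bis_eq:
  fixes p v k :: "'a::real_inner"
  shows "dist (p + t *\<^sub>R v) p = dist (p + t *\<^sub>R v) k \<longleftrightarrow> 2*t*(inner v (k-p)) = inner (k-p) (k-p)"
proof -
  have e1: "p + t *\<^sub>R v - p = t *\<^sub>R v" by simp
  have e2: "p + t *\<^sub>R v - k = t *\<^sub>R v - (k - p)" by (simp add: algebra_simps)
  show ?thesis unfolding dist_norm norm_eq e1 e2
    by (simp add: inner_diff_left inner_diff_right inner_commute algebra_simps)
qed

lemma descent:
  fixes L :: "(real^'d) set"
  assumes lf: "\<And>R. finite (L \<inter> cball 0 R)" and p: "p \<in> L" and q: "q \<in> L" and pq: "p \<noteq> q"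
  shows "\<exists>k\<in>nbrs L p. dist k q < dist p q"
proof -
  define v where "v = q - p"
  define S where "S = {k \<in> L. inner v (k-p) > 0 \<and> norm (k-p) \<le> norm v}"
  define t where "t k = inner (k-p) (k-p) / (2 * inner v (k-p))" for k
  have vpos: "inner v v > 0" using pq v_def by simp
  have qS: "q \<in> S" unfolding S_def using q vpos v_def by simp
  have "S \<subseteq> L \<inter> cball 0 (norm p + norm v)"
  proof
    fix k assume "k \<in> S"
    hence "k \<in> L" "norm (k-p) \<le> norm v" unfolding S_def by auto
    moreover have "norm k \<le> norm p + norm (k - p)" by (metis add.commute diff_add_cancel norm_triangle_ineq)
    ultimately show "k \<in> L \<inter> cball 0 (norm p + norm v)" by auto
  qed
  hence fS: "finite S" using lf finite_subset by blast
  define m where "m = Min (t ` S)"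
  have "m \<in> t ` S" unfolding m_def using fS qS by (intro Min_in) auto
  then obtain ks where ks: "ks \<in> S" "t ks = m" by blast
  have mle: "m \<le> t k" if "k \<in> S" for k unfolding m_def using fS that by (intro Min_le) auto
  have tq: "t q = 1/2" unfolding t_def v_def using vpos v_def by simp
  have ksp: "inner v (ks - p) > 0" "norm (ks-p) \<le> norm v" "ks \<in> L" using ks(1) S_def by auto
  have m0: "m \<ge> 0" using ks(2) ksp(1) unfolding t_def by (metis divide_nonneg_pos inner_ge_zero mult_pos_pos zero_less_numeral)
  have mhalf: "m \<le> 1/2" using mle[OF qS] tq by simp
  define a where "a = p + m *\<^sub>R v"
  have eq: "dist a p = dist a ks" unfolding a_def bis_eq
    using ks(2) ksp(1) unfolding t_def by (simp add: field_simps)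
  have le: "dist a p \<le> dist a k" if k: "k \<in> L" for k
    unfolding a_def bis_le
  proof (cases "inner v (k-p) > 0")
    case False
    then show "2 * m * inner v (k - p) \<le> inner (k - p) (k - p)"
      using m0 by (smt (verit) inner_ge_zero mult_nonneg_nonpos zero_le_mult_iff)
  next
    case True
    show "2 * m * inner v (k - p) \<le> inner (k - p) (k - p)"
    proof (cases "norm (k-p) \<le> norm v")
      case True2: True
      hence "k \<in> S" using k True S_def by auto
      hence "m \<le> t k" by (rule mle)
      hence "2 * m * inner v (k - p) \<le> 2 * t k * inner v (k - p)"
        using True by (intro mult_right_mono) auto
      also have "\<dots> = inner (k - p) (k - p)" unfolding t_def using True by simp
      finally show ?thesis .
    next
      case False
      have "2 * m * inner v (k - p) \<le> inner v (k - p)"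
        using mult_right_mono[of "2*m" 1 "inner v (k-p)"] mhalf True by simp
      also have "\<dots> \<le> norm v * norm (k-p)" by (rule norm_cauchy_schwarz)
      also have "\<dots> \<le> norm (k-p) * norm (k-p)" using False by (intro mult_right_mono) auto
      also have "\<dots> = inner (k - p) (k - p)" by (simp add: dot_square_norm power2_eq_square)
      finally show ?thesis .
    qed
  qed
  have ksn: "ks \<in> nbrs L p"
    unfolding nbrs_def using ksp eq le by auto
  have "inner (ks-p) (ks-p) \<le> inner v (ks - p)"
  proof -
    have "t ks \<le> 1/2" using ks(2) mhalf by simp
    thus ?thesis unfolding t_def using ksp(1) by (simp add: field_simps)
  qed
  hence "inner (ks - q) (ks - q) < inner (p - q) (p - q)"
  proof -
    assume h: "inner (ks-p) (ks-p) \<le> inner v (ks - p)"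
    have sq: "inner (w - u) (w - u) = inner w w - 2 * inner u w + inner u u" for w u :: "real^'d"
      by (simp add: inner_diff_left inner_diff_right inner_commute)
    have e1: "ks - q = (ks - p) - v" and e2: "p - q = 0 - v" unfolding v_def by simp_all
    have "inner (ks - q) (ks - q) = inner (ks-p) (ks-p) - 2 * inner v (ks-p) + inner v v"
      unfolding e1 sq by simp
    moreover have "inner (p - q) (p - q) = inner v v" unfolding e2 sq by simp
    ultimately
    show ?thesis using h ksp(1) by linarith
  qed
  hence "dist ks q < dist p q" unfolding dist_norm norm_lt .
  thus ?thesis using ksn by blast
qed



lemma edge_bound:
  fixes u :: "real^'d \<Rightarrow> real^'s"
  assumes "(p, k) \<in> nb_pairs L" and "u \<in> U12 L"
  shows "norm (u k - u p) \<le> Dnorm L u"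
proof -
  have sm: "Dnorm_sq_terms u summable_on nb_pairs L" using assms(2) unfolding U12_def by simp
  have "infsum (Dnorm_sq_terms u) {(p,k)} \<le> infsum (Dnorm_sq_terms u) (nb_pairs L)"
    using assms(1) sm by (intro infsum_mono_neutral) (auto simp: Dnorm_sq_terms_def)
  hence "(norm (u k - u p))^2 \<le> infsum (Dnorm_sq_terms u) (nb_pairs L)"
    by (simp add: Dnorm_sq_terms_def)
  thus ?thesis unfolding Dnorm_def by (simp add: real_le_rsqrt)
qed

lemma Dnorm_nonneg: "Dnorm L u \<ge> 0"
proof -
  have "infsum (Dnorm_sq_terms u) (nb_pairs L) \<ge> 0"
    by (rule infsum_nonneg) (auto simp: Dnorm_sq_terms_def split: prod.splits)
  thus ?thesis unfolding Dnorm_def by simp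
qed

lemma path_bound:
  fixes L :: "(real^'d) set"
  assumes lf: "\<And>R. finite (L \<inter> cball 0 R)" and q: "q \<in> L"
  shows "p \<in> L \<Longrightarrow> \<exists>N\<ge>0. \<forall>u::real^'d \<Rightarrow> real^'s. u \<in> U12 L \<longrightarrow> norm (u p - u q) \<le> N * Dnorm L u"
proof (induction "card {k \<in> L. dist k q < dist p q}" arbitrary: p rule: less_induct)
  case less
  show ?case
  proof (cases "p = q")
    case True
    then show ?thesis by (intro exI[of _ 0]) auto
  next
    case False
    obtain k where k: "k \<in> nbrs L p" "dist k q < dist p q" using descent[OF lf less.prems q False] by blast
    have kL: "k \<in> L" using k(1) unfolding nbrs_def by auto
    have fin: "finite {k \<in> L. dist k q < dist p q}"
    proof (rule finite_subset[OF _ lf[of "norm q + dist p q"]])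
      show "{k \<in> L. dist k q < dist p q} \<subseteq> L \<inter> cball 0 (norm q + dist p q)"
      proof
        fix x assume "x \<in> {k \<in> L. dist k q < dist p q}"
        hence "x \<in> L" "norm (x - q) < dist p q" by (auto simp: dist_norm)
        moreover have "norm x \<le> norm q + norm (x - q)" by (rule norm_triangle_sub)
        ultimately show "x \<in> L \<inter> cball 0 (norm q + dist p q)" by auto
      qed
    qed
    have "{k' \<in> L. dist k' q < dist k q} \<subset> {k \<in> L. dist k q < dist p q}"
      using k(2) kL by auto
    hence "card {k' \<in> L. dist k' q < dist k q} < card {k \<in> L. dist k q < dist p q}"
      using fin by (meson psubset_card_mono)
    from less.hyps[OF this kL] obtain N where N: "N \<ge> 0" "\<forall>u::real^'d \<Rightarrow> real^'s. u \<in> U12 L \<longrightarrow> norm (u k - u q) \<le> N * Dnorm L u" by blast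
    have pk: "(p, k) \<in> nb_pairs L" using k(1) less.prems unfolding nb_pairs_def by auto
    have "norm (u p - u q) \<le> (N + 1) * Dnorm L u" if u: "u \<in> U12 L" for u :: "real^'d \<Rightarrow> real^'s"
    proof -
      have "u p - u q = (u k - u q) - (u k - u p)" by simp
      hence "norm (u p - u q) \<le> norm (u k - u q) + norm (u k - u p)"
        by (metis norm_triangle_ineq4)
      also have "\<dots> = norm (u k - u p) + norm (u k - u q)" by simp
      also have "\<dots> \<le> Dnorm L u + N * Dnorm L u" using edge_bound[OF pk u] N(2) u by (intro add_mono) auto
      finally show ?thesis by (simp add: algebra_simps)
    qed
    thus ?thesis using N(1) by (intro exI[of _ "N+1"]) auto
  qed
qed



lemma path_fun:
  fixes L :: "(real^'d) set"
  assumes lf: "\<And>R. finite (L \<inter> cball 0 R)"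
  shows "\<exists>Nf. \<forall>p\<in>L. \<forall>q\<in>L. Nf p q \<ge> 0 \<and> (\<forall>u::real^'d \<Rightarrow> real^'s. u \<in> U12 L \<longrightarrow> norm (u p - u q) \<le> Nf p q * Dnorm L u)"
proof -
  have "\<forall>x\<in>L \<times> L. \<exists>N. N \<ge> 0 \<and> (\<forall>u::real^'d \<Rightarrow> real^'s. u \<in> U12 L \<longrightarrow> norm (u (fst x) - u (snd x)) \<le> N * Dnorm L u)"
    using path_bound[OF lf] by auto
  then obtain f where f: "\<forall>x\<in>L \<times> L. f x \<ge> 0 \<and> (\<forall>u::real^'d \<Rightarrow> real^'s. u \<in> U12 L \<longrightarrow> norm (u (fst x) - u (snd x)) \<le> f x * Dnorm L u)"
    by (rule bchoice_iff[THEN iffD1, elim_format]) blast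
  show ?thesis by (rule exI[of _ "\<lambda>p q. f (p,q)"]) (use f in auto)
qed

lemma RC_in:
  assumes "RC Lam Lh Rdef"
  shows "\<And>x. x \<in> Lh \<Longrightarrow> norm x \<ge> Rdef \<Longrightarrow> x \<in> Lam"
    and "\<And>x. x \<in> Lam \<Longrightarrow> norm x \<ge> Rdef \<Longrightarrow> x \<in> Lh"
proof -
  have e: "Lam - ball 0 Rdef = Lh - ball 0 Rdef" using assms unfolding RC_def by simp
  show "\<And>x. x \<in> Lh \<Longrightarrow> norm x \<ge> Rdef \<Longrightarrow> x \<in> Lam"
  proof -
    fix x assume "x \<in> Lh" "norm x \<ge> Rdef"
    hence "x \<in> Lh - ball 0 Rdef" by auto
    thus "x \<in> Lam" using e by blast
  qed
  show "\<And>x. x \<in> Lam \<Longrightarrow> norm x \<ge> Rdef \<Longrightarrow> x \<in> Lh"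
  proof -
    fix x assume "x \<in> Lam" "norm x \<ge> Rdef"
    hence "x \<in> Lam - ball 0 Rdef" by auto
    thus "x \<in> Lh" using e by blast
  qed
qed

lemma nb_witness:
  assumes "m \<in> nbrs L l" and cov: "\<And>a. \<exists>k\<in>L. dist a k \<le> \<rho>"
  obtains a where "dist a l = dist a m" "\<And>k. k \<in> L \<Longrightarrow> dist a l \<le> dist a k" "dist a l \<le> \<rho>"
proof -
  obtain a where a: "dist a l = dist a m" "\<forall>k\<in>L. dist a l \<le> dist a k" using assms(1) unfolding nbrs_def by auto
  obtain k where "k \<in> L" "dist a k \<le> \<rho>" using cov by blast
  hence "dist a l \<le> \<rho>" using a(2) by force
  thus ?thesis using that a by blast
qed

lemma nb_close:
  assumes "m \<in> nbrs L l" and cov: "\<And>a. \<exists>k\<in>L. dist a k \<le> \<rho>"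
  shows "dist l m \<le> 2 * \<rho>"
proof -
  obtain a where a: "dist a l = dist a m" "dist a l \<le> \<rho>" using nb_witness[OF assms] by metis
  have "dist l m \<le> dist a l + dist a m" by (metis dist_commute dist_triangle)
  thus ?thesis using a by simp
qed

lemma far_agree:
  assumes rc: "RC Lam Lh Rdef" and cov: "\<And>a. \<exists>k\<in>Lh. dist a k \<le> \<rho>"
    and m: "m \<in> nbrs Lh l" and l: "l \<in> Lh" and far: "norm l > Rdef + 2 * \<rho>"
  shows "m \<in> nbrs Lam l" "l \<in> Lam" "m \<in> Lam"
proof -
  obtain a where a: "dist a l = dist a m" "\<And>k. k \<in> Lh \<Longrightarrow> dist a l \<le> dist a k" "dist a l \<le> \<rho>"
    using nb_witness[OF m cov] by metis
  have r0: "\<rho> \<ge> 0" using a(3) zero_le_dist order_trans by blast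
  have R0: "Rdef > 0" using rc unfolding RC_def by simp
  have mLh: "m \<in> Lh" "m \<noteq> l" using m unfolding nbrs_def by auto
  have na: "norm a \<ge> norm l - \<rho>" using a(3) norm_triangle_sub[of l a] by (simp add: dist_norm norm_minus_commute)
  have nm: "norm m \<ge> norm a - \<rho>" using a(1,3) norm_triangle_sub[of a m] by (simp add: dist_norm norm_minus_commute)
  show lL: "l \<in> Lam" using RC_in(1)[OF rc l] far r0 by simp
  show mL: "m \<in> Lam" using RC_in(1)[OF rc mLh(1)] na nm far r0 by simp
  have "dist a l \<le> dist a k" if k: "k \<in> Lam" for k
  proof (cases "norm k \<ge> Rdef")
    case True
    then show ?thesis using a(2) RC_in(2)[OF rc k] by simp
  next
    case False
    have "norm a \<le> norm k + dist a k" using norm_triangle_sub[of a k] by (simp add: dist_norm)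
    thus ?thesis using False na far a(3) by simp
  qed
  thus "m \<in> nbrs Lam l" unfolding nbrs_def using mL mLh(2) a(1) by auto
qed



lemma dnorm_part:
  fixes Lam Lh :: "(real^'d) set"
  assumes rc: "RC Lam Lh Rdef" and cov: "\<And>a. \<exists>k\<in>Lh. dist a k \<le> \<rho>"
    and lfh: "\<And>R. finite (Lh \<inter> cball 0 R)" and lf: "\<And>R. finite (Lam \<inter> cball 0 R)"
    and p0: "p0 \<in> Lam" and r0: "\<rho> \<ge> 0"
  shows "\<exists>C1\<ge>1. \<forall>u::real^'d \<Rightarrow> real^'s. u \<in> U12 Lam \<longrightarrow>
     (\<lambda>x. if x \<in> Lam then u x else u p0) \<in> U12 Lh \<and>
     Dnorm Lh (\<lambda>x. if x \<in> Lam then u x else u p0) \<le> C1 * Dnorm Lam u"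
proof -
  define J where "J x = (if x \<in> Lam then x else p0)" for x
  have JL: "J x \<in> Lam" for x using p0 J_def by auto
  obtain Nf where Nf: "\<forall>p\<in>Lam. \<forall>q\<in>Lam. Nf p q \<ge> 0 \<and> (\<forall>u::real^'d \<Rightarrow> real^'s. u \<in> U12 Lam \<longrightarrow> norm (u p - u q) \<le> Nf p q * Dnorm Lam u)"
    using path_fun[OF lf] by blast
  define R1 where "R1 = Rdef + 2 * \<rho>"
  define Far where "Far = {x \<in> nb_pairs Lh. norm (fst x) > R1}"
  define Near where "Near = {x \<in> nb_pairs Lh. norm (fst x) \<le> R1}"
  have NF: "nb_pairs Lh = Far \<union> Near" "Far \<inter> Near = {}" unfolding Far_def Near_def by auto
  have "Near \<subseteq> (Lh \<inter> cball 0 R1) \<times> (Lh \<inter> cball 0 (R1 + 2 * \<rho>))"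
  proof
    fix x assume x: "x \<in> Near"
    then obtain l m where lm: "x = (l, m)" "l \<in> Lh" "m \<in> nbrs Lh l" "norm l \<le> R1"
      unfolding Near_def nb_pairs_def by auto
    have "m \<in> Lh" using lm(3) unfolding nbrs_def by auto
    moreover have "dist l m \<le> 2 * \<rho>" by (rule nb_close[OF lm(3) cov])
    moreover have "norm m \<le> norm l + dist l m" using norm_triangle_sub[of m l] by (simp add: dist_norm norm_minus_commute)
    ultimately show "x \<in> (Lh \<inter> cball 0 R1) \<times> (Lh \<inter> cball 0 (R1 + 2 * \<rho>))" using lm by auto
  qed
  hence finN: "finite Near" using lfh by (meson finite_SigmaI finite_subset)
  have FarL: "x \<in> nb_pairs Lam \<and> J (fst x) = fst x \<and> J (snd x) = snd x" if xF: "x \<in> Far" for x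
  proof -
    obtain l m where lm: "x = (l, m)" "l \<in> Lh" "m \<in> nbrs Lh l" "norm l > R1"
      using xF unfolding Far_def nb_pairs_def by auto
    note fa = far_agree[OF rc cov lm(3) lm(2) lm(4)[unfolded R1_def]]
    thus ?thesis using lm unfolding nb_pairs_def J_def by auto
  qed
  define KK where "KK = (\<Sum>x\<in>Near. (Nf (J (snd x)) (J (fst x)))^2)"
  have KK0: "KK \<ge> 0" unfolding KK_def by (intro sum_nonneg) auto
  have main: "(\<lambda>x. if x \<in> Lam then u x else u p0) \<in> U12 Lh \<and>
     Dnorm Lh (\<lambda>x. if x \<in> Lam then u x else u p0) \<le> sqrt (1 + KK) * Dnorm Lam u"
    if u: "u \<in> U12 Lam" for u :: "real^'d \<Rightarrow> real^'s"
  proof -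
    define v where "v = (\<lambda>x. if x \<in> Lam then u x else u p0)"
    have vJ: "v x = u (J x)" for x unfolding v_def J_def by auto
    define g where "g = Dnorm_sq_terms v"
    define h where "h = Dnorm_sq_terms u"
    have smL: "h summable_on nb_pairs Lam" using u unfolding U12_def h_def by simp
    have gh: "g x = h x" if "x \<in> Far" for x
      using FarL[OF that] unfolding g_def h_def Dnorm_sq_terms_def vJ by (auto split: prod.splits)
    have FarSub: "Far \<subseteq> nb_pairs Lam" using FarL by auto
    have smF: "g summable_on Far"
      using summable_on_subset_banach[OF smL FarSub] gh summable_on_cong by metis
    have smN: "g summable_on Near" using finN by simp
    have sm: "g summable_on nb_pairs Lh" unfolding NF(1) by (rule summable_on_Un_disjoint[OF smF smN NF(2)])
    have h0: "\<And>x. h x \<ge> 0" unfolding h_def Dnorm_sq_terms_def by (auto split: prod.splits)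
    have g0: "\<And>x. g x \<ge> 0" unfolding g_def Dnorm_sq_terms_def by (auto split: prod.splits)
    define Dn where "Dn = Dnorm Lam u"
    have ih0: "infsum h (nb_pairs Lam) \<ge> 0" by (rule infsum_nonneg) (use h0 in auto)
    have Dn2: "Dn^2 = infsum h (nb_pairs Lam)" unfolding Dn_def Dnorm_def h_def using ih0 h_def by simp
    have iF: "infsum g Far \<le> Dn^2"
    proof -
      have "infsum g Far = infsum h Far" using gh by (rule infsum_cong)
      also have "\<dots> \<le> infsum h (nb_pairs Lam)"
        by (rule infsum_mono_neutral[OF summable_on_subset_banach[OF smL FarSub] smL]) (use FarSub h0 in auto)
      finally show ?thesis using Dn2 by simp
    qed
    have iN: "infsum g Near \<le> KK * Dn^2"
    proof -
      have "infsum g Near = sum g Near" using finN by simp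
      also have "\<dots> \<le> (\<Sum>x\<in>Near. (Nf (J (snd x)) (J (fst x)))^2 * Dn^2)"
      proof (rule sum_mono)
        fix x assume "x \<in> Near"
        obtain l m where x: "x = (l, m)" by fastforce
        have nb: "norm (u (J m) - u (J l)) \<le> Nf (J m) (J l) * Dn" and nn: "Nf (J m) (J l) \<ge> 0"
          using Nf JL u Dn_def by auto
        have "g x = (norm (u (J m) - u (J l)))^2" unfolding g_def Dnorm_sq_terms_def x vJ by simp
        also have "\<dots> \<le> (Nf (J m) (J l) * Dn)^2" using nb by (intro power_mono) auto
        finally show "g x \<le> (Nf (J (snd x)) (J (fst x)))^2 * Dn^2" using x by (simp add: power_mult_distrib)
      qed
      also have "\<dots> = KK * Dn^2" unfolding KK_def by (simp add: sum_distrib_right)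
      finally show ?thesis .
    qed
    have "infsum g (nb_pairs Lh) = infsum g Far + infsum g Near"
      unfolding NF(1) by (rule infsum_Un_disjoint[OF smF smN NF(2)])
    also have "\<dots> \<le> (1 + KK) * Dn^2" using iF iN by (simp add: algebra_simps)
    finally have le: "infsum g (nb_pairs Lh) \<le> (1 + KK) * Dn^2" .
    have "Dnorm Lh v = sqrt (infsum g (nb_pairs Lh))" unfolding Dnorm_def g_def ..
    also have "\<dots> \<le> sqrt ((1 + KK) * Dn^2)" using le by simp
    also have "\<dots> = sqrt (1 + KK) * Dn" using Dnorm_nonneg[of Lam u] Dn_def by (simp add: real_sqrt_mult)
    finally show ?thesis using sm unfolding U12_def g_def v_def Dn_def by simp
  qed
  show ?thesis using main KK0 by (intro exI[of _ "sqrt (1 + KK)"]) auto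
qed



lemma c0_ineq:
  fixes \<delta> M x y :: real
  assumes "\<delta> > 0" "M \<ge> 0" "x \<ge> \<delta>" "0 \<le> y" "y \<le> x + M"
  shows "(\<delta> / (\<delta> + M)) * y \<le> x"
proof -
  have "(\<delta> / (\<delta> + M)) * y \<le> (\<delta> / (\<delta> + M)) * (x + M)"
    using assms by (intro mult_left_mono) auto
  also have "\<dots> \<le> x"
  proof -
    have "\<delta> * (x + M) \<le> x * (\<delta> + M)" using assms using mult_left_mono[of \<delta> x M] by (simp add: algebra_simps)
    thus ?thesis using assms by (simp add: field_simps)
  qed
  finally show ?thesis .
qed

lemma w_mono:
  assumes "w \<in> L1w d" "0 \<le> r" "r \<le> s"
  shows "w s \<le> w r" "w r > 0"
  using assms unfolding L1w_def by auto

lemma single_le_infsum: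
  fixes f :: "'a \<Rightarrow> ennreal"
  assumes "x \<in> A"
  shows "f x \<le> infsum f A"
proof -
  have "infsum f {x} \<le> infsum f A"
    using assms by (intro infsum_mono_neutral nonneg_summable_on_complete) auto
  thus ?thesis by simp
qed



lemma wpart_pt:
  fixes Lam Lh :: "(real^'d) set" and u :: "real^'d \<Rightarrow> real^'s"
  assumes dpos: "\<delta> > 0" and sep: "\<And>x y. x \<in> Lh \<Longrightarrow> y \<in> Lh \<Longrightarrow> x \<noteq> y \<Longrightarrow> \<delta> \<le> dist x y"
    and p0: "p0 \<in> Lam" and Dfin: "finite (Lh - Lam)" and Ds: "\<And>x. x \<in> Lh - Lam \<Longrightarrow> norm x \<le> Rdef"
    and R0: "Rdef \<ge> 0" and w: "w \<in> L1w d"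
    and c0: "c0 = \<delta> / (\<delta> + (norm p0 + Rdef))"
  shows "\<And>l. l \<in> Lh \<Longrightarrow> l \<in> Lam \<Longrightarrow> wnorm1 Lh w (\<lambda>x. if x \<in> Lam then u x else u p0) l
            \<le> (1 + of_nat (card (Lh - Lam))) * wnorm1 Lam (\<lambda>t. w (c0 * t)) u l"
    and "\<And>l. l \<in> Lh - Lam \<Longrightarrow> wnorm1 Lh w (\<lambda>x. if x \<in> Lam then u x else u p0) l
            \<le> wnorm1 Lam (\<lambda>t. w (c0 * t)) u p0"
proof -
  define M where "M = norm p0 + Rdef"
  have M0: "M \<ge> 0" unfolding M_def using R0 by simp
  have c0': "c0 = \<delta> / (\<delta> + M)" unfolding c0 M_def ..
  have c00: "0 \<le> c0" "c0 \<le> 1" unfolding c0' using dpos M0 by auto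
  have wc: "w x \<le> w (c0 * y)" if "x \<ge> \<delta>" "0 \<le> y" "y \<le> x + M" for x y
  proof (rule w_mono(1)[OF w])
    show "0 \<le> c0 * y" using c00 that by simp
    show "c0 * y \<le> x" unfolding c0' by (rule c0_ineq) (use that dpos M0 in auto)
  qed
  have wge: "w x \<le> w (c0 * x)" if "x \<ge> 0" for x
    by (rule w_mono(1)[OF w]) (use c00 that in \<open>auto intro: mult_left_le_one_le\<close>)
  have wpos: "w x \<ge> 0" if "x \<ge> 0" for x using w_mono(2)[OF w that order_refl] by simp
  define I where "I = (\<lambda>x. if x \<in> Lam then u x else u p0)"
  define D where "D = Lh - Lam"
  {
    fix l assume lh: "l \<in> Lh" and ll: "l \<in> Lam"
    define f where "f m = ennreal (w (norm (m - l)) * norm (I m - I l))" for m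
    define g where "g m = ennreal (w (c0 * norm (m - l)) * norm (u m - u l))" for m
    define W where "W = infsum g (Lam - {l})"
    have split: "Lh - {l} = (Lh \<inter> Lam - {l}) \<union> (D - {l})" "(Lh \<inter> Lam - {l}) \<inter> (D - {l}) = {}"
      unfolding D_def by auto
    have "wnorm1 Lh w I l = infsum f (Lh - {l})" unfolding wnorm1_def f_def ..
    also have "\<dots> = infsum f (Lh \<inter> Lam - {l}) + infsum f (D - {l})"
      unfolding split(1) by (intro infsum_Un_disjoint nonneg_summable_on_complete split(2)) auto
    also have "\<dots> \<le> W + of_nat (card D) * W"
    proof (rule add_mono)
      show "infsum f (Lh \<inter> Lam - {l}) \<le> W" unfolding W_def
      proof (rule infsum_mono_neutral)
        fix m assume "m \<in> (Lh \<inter> Lam - {l}) \<inter> (Lam - {l})"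
        hence m: "m \<in> Lam" by auto
        show "f m \<le> g m" unfolding f_def g_def I_def using m ll
          by (auto intro!: ennreal_leI mult_right_mono wge)
      qed (auto intro: nonneg_summable_on_complete)
      have "f m \<le> W" if m: "m \<in> D - {l}" for m
      proof (cases "p0 = l")
        case True
        then show ?thesis unfolding f_def I_def using m ll by (auto simp: D_def)
      next
        case False
        have mLh: "m \<in> Lh" "m \<notin> Lam" "m \<noteq> l" using m D_def by auto
        have x: "norm (m - l) \<ge> \<delta>" using sep[OF mLh(1) lh mLh(3)] by (simp add: dist_norm)
        have nm: "norm m \<le> Rdef" using Ds mLh by auto
        have "norm (p0 - l) \<le> norm p0 + norm m + norm (m - l)"
          using norm_triangle_ineq4[of p0 m] norm_triangle_ineq[of "p0 - m" "m - l"] by simp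
        hence y: "norm (p0 - l) \<le> norm (m - l) + M" using nm unfolding M_def by simp
        have "f m = ennreal (w (norm (m - l)) * norm (u p0 - u l))" unfolding f_def I_def using mLh ll by simp
        also have "\<dots> \<le> g p0" unfolding g_def using wc[OF x _ y]
          by (intro ennreal_leI mult_right_mono) auto
        also have "\<dots> \<le> W" unfolding W_def using p0 False by (intro single_le_infsum) auto
        finally show ?thesis .
      qed
      hence "sum f (D - {l}) \<le> of_nat (card (D - {l})) * W"
        by (rule sum_bounded_above)
      hence "infsum f (D - {l}) \<le> of_nat (card (D - {l})) * W"
        using Dfin by (simp add: D_def)
      also have "\<dots> \<le> of_nat (card D) * W"
        using Dfin by (intro mult_right_mono) (auto simp: D_def card_Diff1_le)
      finally show "infsum f (D - {l}) \<le> of_nat (card D) * W" .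
    qed
    also have "\<dots> = (1 + of_nat (card D)) * W" by (simp add: algebra_simps)
    finally have "wnorm1 Lh w I l \<le> (1 + of_nat (card D)) * wnorm1 Lam (\<lambda>t. w (c0 * t)) u l"
      unfolding W_def g_def wnorm1_def by simp
  }
  thus "\<And>l. l \<in> Lh \<Longrightarrow> l \<in> Lam \<Longrightarrow> wnorm1 Lh w (\<lambda>x. if x \<in> Lam then u x else u p0) l
            \<le> (1 + of_nat (card (Lh - Lam))) * wnorm1 Lam (\<lambda>t. w (c0 * t)) u l"
    unfolding I_def D_def by blast
  fix l assume l: "l \<in> Lh - Lam"
  define f where "f m = ennreal (w (norm (m - l)) * norm (I m - I l))" for m
  define g where "g m = ennreal (w (c0 * norm (m - p0)) * norm (u m - u p0))" for m
  have "wnorm1 Lh w I l = infsum f (Lh - {l})" unfolding wnorm1_def f_def ..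
  also have "\<dots> \<le> infsum g (Lam - {p0})"
  proof (rule infsum_mono_neutral)
    fix m assume "m \<in> (Lh - {l}) \<inter> (Lam - {p0})"
    hence mLh: "m \<in> Lh" "m \<in> Lam" "m \<noteq> l" "m \<noteq> p0" by auto
    have x: "norm (m - l) \<ge> \<delta>" using sep[OF mLh(1) _ mLh(3)] l by (simp add: dist_norm)
    have nl: "norm l \<le> Rdef" using Ds l by auto
    have "norm (m - p0) \<le> norm (m - l) + norm l + norm p0"
      using norm_triangle_ineq4[of l p0] norm_triangle_ineq[of "m - l" "l - p0"] by simp
    hence y: "norm (m - p0) \<le> norm (m - l) + M" using nl unfolding M_def by simp
    show "f m \<le> g m" unfolding f_def g_def I_def using mLh l wc[OF x _ y]
      by (auto intro!: ennreal_leI mult_right_mono)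
  next
    fix m assume "m \<in> (Lh - {l}) - (Lam - {p0})"
    thus "f m \<le> 0" unfolding f_def I_def using l by auto
  qed (auto intro: nonneg_summable_on_complete)
  finally show "wnorm1 Lh w (\<lambda>x. if x \<in> Lam then u x else u p0) l
            \<le> wnorm1 Lam (\<lambda>t. w (c0 * t)) u p0"
    unfolding I_def g_def wnorm1_def by simp
qed



lemma ennreal_cnt: "ennreal (1 + 2 * real n) = 1 + 2 * of_nat n"
  by (simp add: ennreal_plus ennreal_mult ennreal_of_nat_eq_real_of_nat)

lemma wpart_sum:
  fixes Lam Lh :: "(real^'d) set" and u :: "real^'d \<Rightarrow> real^'s"
  assumes dpos: "\<delta> > 0" and sep: "\<And>x y. x \<in> Lh \<Longrightarrow> y \<in> Lh \<Longrightarrow> x \<noteq> y \<Longrightarrow> \<delta> \<le> dist x y"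
    and p0: "p0 \<in> Lam" and Dfin: "finite (Lh - Lam)" and Ds: "\<And>x. x \<in> Lh - Lam \<Longrightarrow> norm x \<le> Rdef"
    and R0: "Rdef \<ge> 0" and w: "w \<in> L1w d"
    and c0: "c0 = \<delta> / (\<delta> + (norm p0 + Rdef))"
    and lfh: "finite (Lh \<inter> ball 0 r)" and lf: "finite (Lam \<inter> ball 0 R)"
    and rR: "r \<le> R" and pR: "norm p0 < R"
  shows "(\<Sum>l\<in>Lh \<inter> ball 0 r. wnorm1 Lh w (\<lambda>x. if x \<in> Lam then u x else u p0) l)
     \<le> ennreal (1 + 2 * real (card (Lh - Lam))) * (\<Sum>l\<in>Lam \<inter> ball 0 R. wnorm1 Lam (\<lambda>t. w (c0 * t)) u l)"
proof -
  define P where "P l = wnorm1 Lh w (\<lambda>x. if x \<in> Lam then u x else u p0) l" for l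
  define W where "W l = wnorm1 Lam (\<lambda>t. w (c0 * t)) u l" for l
  define S where "S = (\<Sum>l\<in>Lam \<inter> ball 0 R. W l)"
  define cD where "cD = card (Lh - Lam)"
  note pt = wpart_pt[OF dpos sep p0 Dfin Ds R0 w c0, of _ u]
  define X where "X = Lh \<inter> Lam \<inter> ball 0 r"
  define Y where "Y = (Lh - Lam) \<inter> ball 0 r"
  have XY: "Lh \<inter> ball 0 r = X \<union> Y" "X \<inter> Y = {}" "finite X" "finite Y"
    unfolding X_def Y_def using lfh by (auto intro: finite_subset)
  have "sum P (Lh \<inter> ball 0 r) = sum P X + sum P Y" unfolding XY(1) by (rule sum.union_disjoint[OF XY(3,4,2)])
  also have "\<dots> \<le> (1 + of_nat cD) * S + of_nat cD * S"
  proof (rule add_mono)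
    have "sum P X \<le> (\<Sum>l\<in>X. (1 + of_nat cD) * W l)"
      by (rule sum_mono) (use pt(1) in \<open>auto simp: X_def P_def W_def cD_def\<close>)
    also have "\<dots> = (1 + of_nat cD) * sum W X" by (simp add: sum_distrib_left)
    also have "\<dots> \<le> (1 + of_nat cD) * S" unfolding S_def
      by (intro mult_left_mono sum_mono2[OF lf]) (use rR in \<open>auto simp: X_def\<close>)
    finally show "sum P X \<le> (1 + of_nat cD) * S" .
    have "sum P Y \<le> of_nat (card Y) * W p0"
      by (rule sum_bounded_above) (use pt(2) in \<open>auto simp: Y_def P_def W_def\<close>)
    also have "\<dots> \<le> of_nat cD * S"
    proof (rule mult_mono)
      show "of_nat (card Y) \<le> (of_nat cD :: ennreal)" unfolding cD_def Y_def using Dfin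
        by (simp add: card_mono)
      show "W p0 \<le> S" unfolding S_def by (rule member_le_sum) (use p0 pR lf in auto)
    qed auto
    finally show "sum P Y \<le> of_nat cD * S" .
  qed
  also have "\<dots> = ennreal (1 + 2 * real cD) * S" unfolding ennreal_cnt by (simp add: algebra_simps mult_2_right distrib_left)
  finally show ?thesis unfolding P_def S_def W_def cD_def .
qed



theorem mainTheorem18:
  fixes A :: "real^'d^'d" and Lam :: "(real^'d) set" and Rdef :: real
  assumes dim: "CARD('d) \<in> {2, 3}" and dims: "CARD('s) \<in> {2, 3}"
    and A: "invertible A"
    and rc: "RC Lam (hom_lattice A) Rdef"
  shows "\<exists>(I :: (real^'d \<Rightarrow> real^'s) \<Rightarrow> (real^'d \<Rightarrow> real^'s)) (C :: real). C > 0 \<and>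
      (\<forall>u\<in>U12 Lam. \<forall>v\<in>U12 Lam. \<forall>a b. \<forall>l\<in>hom_lattice A.
          I (\<lambda>x. a *\<^sub>R u x + b *\<^sub>R v x) l = a *\<^sub>R I u l + b *\<^sub>R I v l) \<and>
      (\<forall>u\<in>U12 Lam. \<forall>v\<in>U12 Lam. (\<forall>x\<in>Lam. u x = v x) \<longrightarrow> (\<forall>l\<in>hom_lattice A. I u l = I v l)) \<and>
      (\<forall>u\<in>U12 Lam. I u \<in> U12 (hom_lattice A)
          \<and> Dnorm (hom_lattice A) (I u) \<le> C * Dnorm Lam u
          \<and> (\<forall>l\<in>hom_lattice A. norm l > Rdef \<longrightarrow> I u l = u l)) \<and>
      (\<exists>c0. 0 < c0 \<and> c0 \<le> 1 \<and>
        (\<forall>r>0. \<exists>R\<ge>r. \<forall>w\<in>L1w CARD('d). \<forall>u\<in>U12 Lam.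
           (\<Sum>l\<in>hom_lattice A \<inter> ball 0 r. wnorm1 (hom_lattice A) w (I u) l)
             \<le> ennreal C * (\<Sum>l\<in>Lam \<inter> ball 0 R. wnorm1 Lam (\<lambda>t. w (c0 * t)) u l)))"
proof -
  define Lh where "Lh = hom_lattice A"
  have Rpos: "Rdef > 0" and finD: "finite (Lam \<inter> ball 0 Rdef)" using rc unfolding RC_def by auto
  note rcL = rc[folded Lh_def]
  obtain \<rho> where rho: "\<rho> > 0" "\<And>a. \<exists>k\<in>Lh. dist a k \<le> \<rho>" using cover[OF A] unfolding Lh_def by metis
  obtain \<delta> where delta: "\<delta> > 0" "\<And>x y. x \<in> Lh \<Longrightarrow> y \<in> Lh \<Longrightarrow> x \<noteq> y \<Longrightarrow> \<delta> \<le> dist x y"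
    using sep[OF A] unfolding Lh_def by metis
  have lfh: "finite (Lh \<inter> cball 0 R)" for R unfolding Lh_def by (rule lat_finite[OF A])
  have lf: "finite (Lam \<inter> cball 0 R)" for R
  proof (rule finite_subset[OF _ finite_UnI[OF finD lfh[of R]]])
    show "Lam \<inter> cball 0 R \<subseteq> Lam \<inter> ball 0 Rdef \<union> Lh \<inter> cball 0 R"
      using RC_in(2)[OF rcL] by (auto simp: mem_ball dist_norm) (meson not_less)
  qed
  obtain p0 where p0: "p0 \<in> Lam"
  proof -
    define a :: "real^'d" where "a = (Rdef + \<rho> + 1) *\<^sub>R axis undefined 1"
    have na: "norm a = Rdef + \<rho> + 1" unfolding a_def using Rpos rho(1) by simp
    obtain k where k: "k \<in> Lh" "dist a k \<le> \<rho>" using rho(2) by blast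
    have "norm a \<le> norm k + dist a k" using norm_triangle_sub[of a k] by (simp add: dist_norm)
    hence "norm k \<ge> Rdef" using na k(2) by simp
    thus ?thesis using that RC_in(1)[OF rcL k(1)] by blast
  qed
  define D where "D = Lh - Lam"
  have Ds: "norm x \<le> Rdef" if "x \<in> D" for x
    using that RC_in(1)[OF rcL] unfolding D_def by (meson DiffE linorder_not_le less_le)
  have Dfin: "finite D" by (rule finite_subset[OF _ lfh[of Rdef]]) (use Ds D_def in auto)
  obtain C1 where C1: "C1 \<ge> 1" "\<And>u::real^'d \<Rightarrow> real^'s. u \<in> U12 Lam \<Longrightarrow>
     (\<lambda>x. if x \<in> Lam then u x else u p0) \<in> U12 Lh \<and>
     Dnorm Lh (\<lambda>x. if x \<in> Lam then u x else u p0) \<le> C1 * Dnorm Lam u"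
    using dnorm_part[OF rcL rho(2) lfh lf p0 less_imp_le[OF rho(1)]] by blast
  define C where "C = max C1 (1 + 2 * real (card D))"
  define I :: "(real^'d \<Rightarrow> real^'s) \<Rightarrow> (real^'d \<Rightarrow> real^'s)" where
    "I = (\<lambda>u x. if x \<in> Lam then u x else u p0)"
  define c0 where "c0 = \<delta> / (\<delta> + (norm p0 + Rdef))"
  have Cpos: "C > 0" unfolding C_def using C1 by simp
  have P1: "\<forall>u\<in>U12 Lam. \<forall>v\<in>U12 Lam. \<forall>a b. \<forall>l\<in>hom_lattice A.
          I (\<lambda>x. a *\<^sub>R u x + b *\<^sub>R v x) l = a *\<^sub>R I u l + b *\<^sub>R I v l" unfolding I_def by simp
  have P2: "\<forall>u\<in>U12 Lam. \<forall>v\<in>U12 Lam. (\<forall>x\<in>Lam. u x = v x) \<longrightarrow> (\<forall>l\<in>hom_lattice A. I u l = I v l)"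
    unfolding I_def using p0 by simp
  have P3: "\<forall>u\<in>U12 Lam. I u \<in> U12 (hom_lattice A)
          \<and> Dnorm (hom_lattice A) (I u) \<le> C * Dnorm Lam u
          \<and> (\<forall>l\<in>hom_lattice A. norm l > Rdef \<longrightarrow> I u l = u l)"
  proof (rule ballI)
    fix u :: "real^'d \<Rightarrow> real^'s" assume u: "u \<in> U12 Lam"
    have 1: "I u \<in> U12 (hom_lattice A)" using C1(2)[OF u] unfolding I_def Lh_def by simp
    have "Dnorm (hom_lattice A) (I u) \<le> C1 * Dnorm Lam u" using C1(2)[OF u] unfolding I_def Lh_def by simp
    also have "\<dots> \<le> C * Dnorm Lam u" unfolding C_def by (intro mult_right_mono Dnorm_nonneg) simp
    finally have 2: "Dnorm (hom_lattice A) (I u) \<le> C * Dnorm Lam u" .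
    have 3: "\<forall>l\<in>hom_lattice A. norm l > Rdef \<longrightarrow> I u l = u l"
      using RC_in(1)[OF rcL] unfolding I_def Lh_def by auto
    show "I u \<in> U12 (hom_lattice A)
          \<and> Dnorm (hom_lattice A) (I u) \<le> C * Dnorm Lam u
          \<and> (\<forall>l\<in>hom_lattice A. norm l > Rdef \<longrightarrow> I u l = u l)" using 1 2 3 by blast
  qed
  have np: "norm p0 + Rdef \<ge> 0" using Rpos by simp
  have c0pos: "0 < c0" "c0 \<le> 1" unfolding c0_def using delta(1) np by (auto simp: divide_le_eq_1)
  have P4: "\<forall>r>0. \<exists>R\<ge>r. \<forall>w\<in>L1w CARD('d). \<forall>u\<in>U12 Lam.
           (\<Sum>l\<in>hom_lattice A \<inter> ball 0 r. wnorm1 (hom_lattice A) w (I u) l)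
             \<le> ennreal C * (\<Sum>l\<in>Lam \<inter> ball 0 R. wnorm1 Lam (\<lambda>t. w (c0 * t)) u l)"
  proof (intro allI impI)
    fix r :: real assume "r > 0"
    define R where "R = max r (norm p0 + 1)"
    have "\<forall>w\<in>L1w CARD('d). \<forall>u\<in>U12 Lam.
           (\<Sum>l\<in>hom_lattice A \<inter> ball 0 r. wnorm1 (hom_lattice A) w (I u) l)
             \<le> ennreal C * (\<Sum>l\<in>Lam \<inter> ball 0 R. wnorm1 Lam (\<lambda>t. w (c0 * t)) u l)"
    proof (intro ballI)
      fix w and u :: "real^'d \<Rightarrow> real^'s" assume w: "w \<in> L1w CARD('d)" and u: "u \<in> U12 Lam"
      have fh: "finite (Lh \<inter> ball 0 r)" by (rule finite_subset[OF _ lfh[of r]]) auto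
      have fl: "finite (Lam \<inter> ball 0 R)" by (rule finite_subset[OF _ lf[of R]]) auto
      have "(\<Sum>l\<in>Lh \<inter> ball 0 r. wnorm1 Lh w (\<lambda>x. if x \<in> Lam then u x else u p0) l)
         \<le> ennreal (1 + 2 * real (card (Lh - Lam))) * (\<Sum>l\<in>Lam \<inter> ball 0 R. wnorm1 Lam (\<lambda>t. w (c0 * t)) u l)"
        by (rule wpart_sum[OF delta p0 Dfin[unfolded D_def] Ds[unfolded D_def] less_imp_le[OF Rpos] w c0_def fh fl])
           (auto simp: R_def)
      also have "\<dots> \<le> ennreal C * (\<Sum>l\<in>Lam \<inter> ball 0 R. wnorm1 Lam (\<lambda>t. w (c0 * t)) u l)"
        unfolding C_def D_def by (intro mult_right_mono ennreal_leI) auto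
      finally show "(\<Sum>l\<in>hom_lattice A \<inter> ball 0 r. wnorm1 (hom_lattice A) w (I u) l)
             \<le> ennreal C * (\<Sum>l\<in>Lam \<inter> ball 0 R. wnorm1 Lam (\<lambda>t. w (c0 * t)) u l)"
        unfolding I_def Lh_def .
    qed
    thus "\<exists>R\<ge>r. \<forall>w\<in>L1w CARD('d). \<forall>u\<in>U12 Lam.
           (\<Sum>l\<in>hom_lattice A \<inter> ball 0 r. wnorm1 (hom_lattice A) w (I u) l)
             \<le> ennreal C * (\<Sum>l\<in>Lam \<inter> ball 0 R. wnorm1 Lam (\<lambda>t. w (c0 * t)) u l)"
      by (intro exI[of _ R]) (auto simp: R_def)
  qed
  show ?thesis
    by (rule exI[of _ I], rule exI[of _ C]) (use Cpos P1 P2 P3 c0pos P4 in blast)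
qed

end
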